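(* Let $ABC$ be a triangle with circumcircle $(ABC)$, and let $P, P'$ be isogonal conjugates with respect to $ABC$. Let $D$ be the intersection of $(ABC)$ with the conic $(ABCPP')$ other than $A,B,C$, and let $D'$ be the point of $(ABC)$ such that $DD' \parallel PP'$. Then the following are equivalent: (i) either line $PP'$ is tangent to the conic $(ABCD'P)$, or line $PP'$ passes through the center of the conic $(ABCD'P)$; (ii) $P$ lies on either the major axis or the minor axis of the conic $(ABCD'P)$.
   Context: For five points $V,W,X,Y,Z$, $(VWXYZ)$ denotes the conic through them; $(ABC)$ denotes the circumcircle of $ABC$. *)

theory Defs
  imports Complex_Main
begin

(* Points of the Euclidean plane are complex numbers (x = Re z, y = Im z). *)

definition collinear3 :: "complex \<Rightarrow> complex \<Rightarrow> complex \<Rightarrow> bool" where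
  "collinear3 X Y Z \<longleftrightarrow> Im ((Y - X) * cnj (Z - X)) = 0"

definition reflect_across :: "complex \<Rightarrow> complex \<Rightarrow> complex \<Rightarrow> complex" where
  "reflect_across L1 L2 X = L1 + ((L2 - L1) / cnj (L2 - L1)) * cnj (X - L1)"

definition bisector_point :: "complex \<Rightarrow> complex \<Rightarrow> complex \<Rightarrow> complex" where
  "bisector_point A B C = A + (B - A) / of_real (cmod (B - A)) + (C - A) / of_real (cmod (C - A))"

definition isogonal_at :: "complex \<Rightarrow> complex \<Rightarrow> complex \<Rightarrow> complex \<Rightarrow> complex \<Rightarrow> bool" where
  "isogonal_at A B C P P' \<longleftrightarrow> collinear3 A (reflect_across A (bisector_point A B C) P) P'"

definition off_sidelines :: "complex \<Rightarrow> complex \<Rightarrow> complex \<Rightarrow> complex \<Rightarrow> bool" where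
  "off_sidelines A B C P \<longleftrightarrow> \<not> collinear3 B C P \<and> \<not> collinear3 C A P \<and> \<not> collinear3 A B P"

definition isogonal_conjugates :: "complex \<Rightarrow> complex \<Rightarrow> complex \<Rightarrow> complex \<Rightarrow> complex \<Rightarrow> bool" where
  "isogonal_conjugates A B C P P' \<longleftrightarrow>
     off_sidelines A B C P \<and> off_sidelines A B C P' \<and>
     isogonal_at A B C P P' \<and> isogonal_at B C A P P' \<and> isogonal_at C A B P P'"

(* conic  a x^2 + b x y + c y^2 + d x + e y + f = 0, given by its coefficients (a,b,c,d,e,f) *)
type_synonym conic = "real \<times> real \<times> real \<times> real \<times> real \<times> real"

definition conic_eval :: "conic \<Rightarrow> complex \<Rightarrow> real" where
  "conic_eval q z = (case q of (a, b, c, d, e, f) \<Rightarrow>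
      a * (Re z)^2 + b * Re z * Im z + c * (Im z)^2 + d * Re z + e * Im z + f)"

definition conic_scale :: "real \<Rightarrow> conic \<Rightarrow> conic" where
  "conic_scale k q = (case q of (a, b, c, d, e, f) \<Rightarrow> (k*a, k*b, k*c, k*d, k*e, k*f))"

definition conic_through :: "conic \<Rightarrow> complex set \<Rightarrow> bool" where
  "conic_through q S \<longleftrightarrow> q \<noteq> (0, 0, 0, 0, 0, 0) \<and> (\<forall>z\<in>S. conic_eval q z = 0)"

definition is_the_conic :: "conic \<Rightarrow> complex set \<Rightarrow> bool" where
  "is_the_conic q S \<longleftrightarrow> conic_through q S \<and> (\<forall>q'. conic_through q' S \<longrightarrow> (\<exists>k. q' = conic_scale k q))"

definition conic_nondegenerate :: "conic \<Rightarrow> bool" where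
  "conic_nondegenerate q = (case q of (a, b, c, d, e, f) \<Rightarrow>
      a * (c * f - (e/2)^2) - (b/2) * ((b/2) * f - (e/2) * (d/2)) + (d/2) * ((b/2) * (e/2) - c * (d/2)) \<noteq> 0)"

definition conic_central :: "conic \<Rightarrow> bool" where
  "conic_central q = (case q of (a, b, c, d, e, f) \<Rightarrow> 4 * a * c - b^2 \<noteq> 0)"

definition is_center :: "conic \<Rightarrow> complex \<Rightarrow> bool" where
  "is_center q z = (case q of (a, b, c, d, e, f) \<Rightarrow>
      2*a * Re z + b * Im z + d = 0 \<and> b * Re z + 2*c * Im z + e = 0)"

(* w is an eigenvector of the matrix [[a, b/2], [b/2, c]] of the quadratic part *)
definition principal_direction :: "conic \<Rightarrow> complex \<Rightarrow> bool" where
  "principal_direction q w = (case q of (a, b, c, d, e, f) \<Rightarrow>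
      w \<noteq> 0 \<and> (\<exists>k. a * Re w + (b/2) * Im w = k * Re w \<and> (b/2) * Re w + c * Im w = k * Im w))"

(* the axes of a central conic: lines through the center along the principal directions *)
definition on_major_or_minor_axis :: "conic \<Rightarrow> complex \<Rightarrow> bool" where
  "on_major_or_minor_axis q X \<longleftrightarrow> (\<exists>z. is_center q z \<and> (X = z \<or> principal_direction q (X - z)))"

(* the line XY meets the conic in a double point *)
definition tangent_line :: "conic \<Rightarrow> complex \<Rightarrow> complex \<Rightarrow> bool" where
  "tangent_line q X Y \<longleftrightarrow> X \<noteq> Y \<and>
     (\<exists>\<alpha> \<beta> \<gamma>. \<alpha> \<noteq> 0 \<and> (\<forall>t::real. conic_eval q (X + of_real t * (Y - X)) = \<alpha> * t^2 + \<beta> * t + \<gamma>)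
        \<and> \<beta>^2 = 4 * \<alpha> * \<gamma>)"

definition line_through_center :: "conic \<Rightarrow> complex \<Rightarrow> complex \<Rightarrow> bool" where
  "line_through_center q X Y \<longleftrightarrow> (\<exists>z. is_center q z \<and> collinear3 X Y z)"

end

theory Submission
  imports Defs
begin
lemma unit_cnj: assumes "cmod u = 1" shows "cnj u = 1 / u"
proof -
  have "u * cnj u = complex_of_real ((cmod u)^2)" unfolding complex_mult_cnj cmod_power2 ..
  then have "u * cnj u = 1" using assms by simp
  moreover have "u \<noteq> 0" using assms by auto
  ultimately show ?thesis by (simp add: eq_divide_eq mult.commute)
qed

lemma s_eq:
  assumes "cmod u1 = 1" "cmod u2 = 1" "u1 + u2 \<noteq> 0"
  shows "(u1 + u2) / cnj (u1 + u2) = u1 * u2"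
proof -
  have n1: "u1 \<noteq> 0" "u2 \<noteq> 0" using assms by auto
  have "cnj (u1 + u2) = (u1 + u2) / (u1 * u2)"
    unfolding complex_cnj_add unit_cnj[OF assms(1)] unit_cnj[OF assms(2)] using n1 by (simp add: field_simps)
  then show ?thesis using assms(3) n1 by simp
qed

lemma Im_ofreal_mult: "Im (complex_of_real r * z) = r * Im z" by simp

lemma iso_im:
  assumes tri: "\<not> collinear3 A B C"
  shows "isogonal_at A B C P P' \<longleftrightarrow> Im ((B-A)*(C-A)*cnj((P-A)*(P'-A))) = 0"
proof -
  define nb where "nb = cmod (B - A)"
  define nc where "nc = cmod (C - A)"
  have AB: "A \<noteq> B" and AC: "A \<noteq> C" using tri unfolding collinear3_def by auto
  have nb: "nb > 0" and nc: "nc > 0" using AB AC unfolding nb_def nc_def by auto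
  define u1 where "u1 = (B - A) / complex_of_real nb"
  define u2 where "u2 = (C - A) / complex_of_real nc"
  have u1: "cmod u1 = 1" using nb unfolding u1_def nb_def by (simp add: norm_divide)
  have u2: "cmod u2 = 1" using nc unfolding u2_def nc_def by (simp add: norm_divide)
  have bp: "bisector_point A B C - A = u1 + u2"
    unfolding bisector_point_def u1_def u2_def nb_def nc_def by simp
  have ne: "u1 + u2 \<noteq> 0"
  proof
    assume "u1 + u2 = 0"
    then have "C - A = - complex_of_real (nc / nb) * (B - A)"
      using nb nc unfolding u1_def u2_def by (simp add: field_simps)
    then have "collinear3 A B C" unfolding collinear3_def
      by simp (simp add: algebra_simps)
    then show False using tri by simp
  qed
  have s: "(u1 + u2) / cnj (u1 + u2) = complex_of_real (1/(nb*nc)) * ((B-A)*(C-A))"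
  proof -
    have "(u1 + u2) / cnj (u1 + u2) = u1 * u2" by (rule s_eq[OF u1 u2 ne])
    also have "\<dots> = complex_of_real (1/(nb*nc)) * ((B-A)*(C-A))"
      unfolding u1_def u2_def using nb nc by (simp add: field_simps)
    finally show ?thesis .
  qed
  have "isogonal_at A B C P P' \<longleftrightarrow> Im ((reflect_across A (bisector_point A B C) P - A) * cnj (P' - A)) = 0"
    unfolding isogonal_at_def collinear3_def
    by (metis (no_types, lifting) Im_complex_div_eq_0 complex_cnj_cancel_iff complex_cnj_diff complex_cnj_mult complex_cnj_zero_iff complex_mult_cnj mult.commute)
  also have "\<dots> \<longleftrightarrow> Im (complex_of_real (1/(nb*nc)) * ((B-A)*(C-A)*cnj((P-A)*(P'-A)))) = 0"
  proof -
    have "reflect_across A (bisector_point A B C) P - A = ((bisector_point A B C - A) / cnj (bisector_point A B C - A)) * cnj (P - A)"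
      unfolding reflect_across_def by simp
    also have "\<dots> = complex_of_real (1/(nb*nc)) * ((B-A)*(C-A)) * cnj (P - A)"
      unfolding bp s ..
    finally have "(reflect_across A (bisector_point A B C) P - A) * cnj (P' - A) = complex_of_real (1/(nb*nc)) * ((B-A)*(C-A)*cnj((P-A)*(P'-A)))"
      by (simp only: complex_cnj_mult mult.assoc)
    then show ?thesis by simp
  qed
  also have "\<dots> \<longleftrightarrow> Im ((B-A)*(C-A)*cnj((P-A)*(P'-A))) = 0"
    unfolding Im_ofreal_mult using nb nc by simp
  finally show ?thesis .
qed

definition Lf :: "complex \<Rightarrow> complex \<Rightarrow> complex \<Rightarrow> real" where
  "Lf U V X = Im ((X - U) * cnj (V - U))"

lemma prod_ident:
  "Lf A B X * Lf A B Y * (cmod (C-A))^2 - Lf A C X * Lf A C Y * (cmod (B-A))^2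
   = - Im (cnj (B-A) * (C-A)) * Im ((B-A)*(C-A)*cnj((X-A)*(Y-A)))"
  unfolding Lf_def cmod_power2 by (simp add: power2_eq_square) algebra

lemma iso_prod:
  assumes tri: "\<not> collinear3 A B C"
  shows "Im ((B-A)*(C-A)*cnj((X-A)*(Y-A))) = 0 \<longleftrightarrow>
     Lf A B X * Lf A B Y * (cmod (C-A))^2 = Lf A C X * Lf A C Y * (cmod (B-A))^2"
proof -
  have "Im (cnj (B-A) * (C-A)) \<noteq> 0" using tri unfolding collinear3_def
    by (simp add: algebra_simps)
  then show ?thesis using prod_ident[of A B X Y C] by (auto simp: right_minus_eq)
qed

lemma circ_ident:
  assumes "(cmod (B - Oc))^2 = (cmod (A - Oc))^2" "(cmod (C - Oc))^2 = (cmod (A - Oc))^2" "(cmod (X - Oc))^2 = (cmod (A - Oc))^2"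
  shows "(cmod (C-B))^2 * Lf C A X * Lf A B X + (cmod (A-C))^2 * Lf A B X * Lf B C X + (cmod (B-A))^2 * Lf B C X * Lf C A X = 0"
  using assms unfolding Lf_def cmod_power2 by (simp add: power2_eq_square) algebra

definition lprod :: "real \<Rightarrow> real \<Rightarrow> real \<Rightarrow> real \<Rightarrow> real \<Rightarrow> real \<Rightarrow> conic" where
  "lprod p1 q1 r1 p2 q2 r2 = (p1*p2, p1*q2+q1*p2, q1*q2, p1*r2+r1*p2, q1*r2+r1*q2, r1*r2)"

lemma eval_lprod: "conic_eval (lprod p1 q1 r1 p2 q2 r2) z = (p1 * Re z + q1 * Im z + r1) * (p2 * Re z + q2 * Im z + r2)"
  unfolding lprod_def conic_eval_def by (simp add: power2_eq_square algebra_simps)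

definition LL :: "complex \<Rightarrow> complex \<Rightarrow> complex \<Rightarrow> complex \<Rightarrow> conic" where
  "LL U V W Z = lprod (- Im (V-U)) (Re (V-U)) (- Im (U * cnj (V-U))) (- Im (Z-W)) (Re (Z-W)) (- Im (W * cnj (Z-W)))"

lemma Lf_lin: "Lf U V X = - Im (V-U) * Re X + Re (V-U) * Im X + (- Im (U * cnj (V-U)))"
  unfolding Lf_def by (simp add: algebra_simps)

lemma eval_LL: "conic_eval (LL U V W Z) X = Lf U V X * Lf W Z X"
  unfolding LL_def eval_lprod Lf_lin ..

definition cadd3 :: "conic \<Rightarrow> conic \<Rightarrow> conic \<Rightarrow> conic" where
  "cadd3 q1 q2 q3 = (case q1 of (a1,b1,c1,d1,e1,f1) \<Rightarrow> case q2 of (a2,b2,c2,d2,e2,f2) \<Rightarrow> case q3 of (a3,b3,c3,d3,e3,f3) \<Rightarrow>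
     (a1+a2+a3, b1+b2+b3, c1+c2+c3, d1+d2+d3, e1+e2+e3, f1+f2+f3))"

lemma eval_cadd3: "conic_eval (cadd3 q1 q2 q3) z = conic_eval q1 z + conic_eval q2 z + conic_eval q3 z"
  unfolding cadd3_def conic_eval_def by (simp split: prod.splits add: algebra_simps)

lemma eval_scale: "conic_eval (conic_scale k q) z = k * conic_eval q z"
  unfolding conic_scale_def conic_eval_def by (simp split: prod.splits add: algebra_simps)

lemma conic_zero_eval: "q = (0,0,0,0,0,0) \<Longrightarrow> conic_eval q z = 0"
  unfolding conic_eval_def by simp

lemma Lf_swap: "Lf V U X = - Lf U V X"
  unfolding Lf_def by (simp add: algebra_simps)

lemma Lf_self1: "Lf U V U = 0" unfolding Lf_def by simp
lemma Lf_self2: "Lf U V V = 0" unfolding Lf_def by (simp add: algebra_simps)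

lemma cross_lemma:
  fixes x1 x2 x3 y1 y2 y3 m1 m2 m3 K :: real
  assumes "x1+x2+x3 = K" "y1+y2+y3 = K" "m1+m2+m3 = 0"
    "(x2*y3 - x3*y2)*m1 + (x3*y1-x1*y3)*m2 + (x1*y2-x2*y1)*m3 = 0"
  shows "K*((y1-x1)*m2 - (y2-x2)*m1) = 0"
proof -
  have e: "x3 = K - x1 - x2" "y3 = K - y1 - y2" "m3 = - m1 - m2" using assms(1-3) by linarith+
  show ?thesis using assms(4) unfolding e by algebra
qed

lemma Lsum: "Lf B C X + Lf C A X + Lf A B X = Lf A B C"
  unfolding Lf_def by (simp add: algebra_simps)

definition kap :: "conic \<Rightarrow> complex" where
  "kap q = (case q of (a,b,c,d,e,f) \<Rightarrow> Complex ((a-c)/2) (-b/2))"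
definition mq :: "conic \<Rightarrow> real" where
  "mq q = (case q of (a,b,c,d,e,f) \<Rightarrow> (a+c)/2)"
definition epsq :: "conic \<Rightarrow> complex" where
  "epsq q = (case q of (a,b,c,d,e,f) \<Rightarrow> Complex d e)"
definition fq :: "conic \<Rightarrow> real" where
  "fq q = (case q of (a,b,c,d,e,f) \<Rightarrow> f)"

lemma eval_cplx: "complex_of_real (2 * conic_eval q z) = kap q * z^2 + cnj (kap q) * (cnj z)^2
   + 2 * complex_of_real (mq q) * z * cnj z + cnj (epsq q) * z + epsq q * cnj z + 2 * complex_of_real (fq q)"
proof -
  obtain a b c d e f where q: "q = (a,b,c,d,e,f)" by (cases q) auto
  show ?thesis unfolding q kap_def mq_def epsq_def fq_def conic_eval_def
    by (simp add: complex_eq_iff power2_eq_square algebra_simps)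
qed

lemma lagr:
  fixes g0 g1 g2 g3 g4 r1 r2 r3 r4 :: complex
  assumes G: "\<And>z. G z = g4*z^4 + g3*z^3 + g2*z^2 + g1*z + g0"
  shows "(r1-r2)*(r1-r3)*(r1-r4)*(r2-r3)*(r2-r4)*(r3-r4)*(g0-g4*r1*r2*r3*r4) =
    -(G r1*r2*r3*r4*(r2-r3)*(r2-r4)*(r3-r4)-G r2*r1*r3*r4*(r1-r3)*(r1-r4)*(r3-r4)
      +G r3*r1*r2*r4*(r1-r2)*(r1-r4)*(r2-r4)-G r4*r1*r2*r3*(r1-r2)*(r1-r3)*(r2-r3))"
  unfolding G by algebra

lemma unit_poly:
  fixes k ck e ce W cW z cz m f R :: complex
  assumes "z * cz = 1"
  shows "z^2 * (k * (W + R*z)^2 + ck * (cW + R*cz)^2 + 2 * m * (W + R*z) * (cW + R*cz)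
     + ce * (W + R*z) + e * (cW + R*cz) + 2 * f)
   = k*R^2*z^4 + (2*k*W*R + 2*m*R*cW + ce*R)*z^3
     + (k*W^2 + ck*cW^2 + 2*m*W*cW + 2*m*R^2 + ce*W + e*cW + 2*f)*z^2
     + (2*ck*cW*R + 2*m*W*R + e*R)*z + ck*R^2"
  using assms by algebra

lemma laurent:
  assumes R: "R > 0"
    and u: "cmod r1 = 1" "cmod r2 = 1" "cmod r3 = 1" "cmod r4 = 1"
    and dist: "r1 \<noteq> r2" "r1 \<noteq> r3" "r1 \<noteq> r4" "r2 \<noteq> r3" "r2 \<noteq> r4" "r3 \<noteq> r4"
    and z: "conic_eval q (Oc + complex_of_real R * r1) = 0" "conic_eval q (Oc + complex_of_real R * r2) = 0"
           "conic_eval q (Oc + complex_of_real R * r3) = 0" "conic_eval q (Oc + complex_of_real R * r4) = 0"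
  shows "cnj (kap q) = kap q * r1 * r2 * r3 * r4"
proof -
  define k where "k = kap q"
  define m where "m = complex_of_real (mq q)"
  define e where "e = epsq q"
  define f where "f = complex_of_real (fq q)"
  define G where "G = (\<lambda>z. (k*R^2)*z^4 + (2*k*Oc*R + 2*m*R*cnj Oc + cnj e*R)*z^3
     + (k*Oc^2 + cnj k*(cnj Oc)^2 + 2*m*Oc*cnj Oc + 2*m*R^2 + cnj e*Oc + e*cnj Oc + 2*f)*z^2
     + (2*cnj k*cnj Oc*R + 2*m*Oc*R + e*R)*z + cnj k*R^2)"
  have Gz: "G r = 0" if "cmod r = 1" "conic_eval q (Oc + complex_of_real R * r) = 0" for r
  proof -
    have "r * cnj r = 1" using that(1) unit_cnj[OF that(1)] by (auto simp: field_simps)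
    have "complex_of_real (2 * conic_eval q (Oc + complex_of_real R * r)) = 0" using that(2) by simp
    then have "k * (Oc + R*r)^2 + cnj k * (cnj Oc + R*cnj r)^2 + 2 * m * (Oc + R*r) * (cnj Oc + R*cnj r)
     + cnj e * (Oc + R*r) + e * (cnj Oc + R*cnj r) + 2 * f = 0"
      unfolding eval_cplx k_def m_def e_def f_def by simp
    then have "r^2 * (k * (Oc + R*r)^2 + cnj k * (cnj Oc + R*cnj r)^2 + 2 * m * (Oc + R*r) * (cnj Oc + R*cnj r)
     + cnj e * (Oc + R*r) + e * (cnj Oc + R*cnj r) + 2 * f) = 0" by simp
    then show ?thesis unfolding unit_poly[OF \<open>r * cnj r = 1\<close>] G_def by (simp only: of_real_power)
  qed
  have "(r1-r2)*(r1-r3)*(r1-r4)*(r2-r3)*(r2-r4)*(r3-r4)*(cnj k*R^2-(k*R^2)*r1*r2*r3*r4) = 0"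
    using lagr[of G "k*R^2" "2*k*Oc*R + 2*m*R*cnj Oc + cnj e*R"
        "k*Oc^2 + cnj k*(cnj Oc)^2 + 2*m*Oc*cnj Oc + 2*m*R^2 + cnj e*Oc + e*cnj Oc + 2*f"
        "2*cnj k*cnj Oc*R + 2*m*Oc*R + e*R" "cnj k*R^2" r1 r2 r3 r4]
      Gz[OF u(1) z(1)] Gz[OF u(2) z(2)] Gz[OF u(3) z(3)] Gz[OF u(4) z(4)]
    unfolding G_def by simp
  then have "cnj k*R^2-(k*R^2)*r1*r2*r3*r4 = 0" using dist by simp
  then have "complex_of_real (R^2) * (cnj k - k*r1*r2*r3*r4) = 0" by (simp add: algebra_simps)
  then show ?thesis using R unfolding k_def by simp
qed

lemma lin_zero:
  fixes p1 p2 p3 :: real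
  assumes tri: "\<not> collinear3 A B C"
    and h: "p1 * Re A + p2 * Im A + p3 = 0" "p1 * Re B + p2 * Im B + p3 = 0" "p1 * Re C + p2 * Im C + p3 = 0"
  shows "p1 = 0 \<and> p2 = 0 \<and> p3 = 0"
proof -
  define dt where "dt = Im ((B-A)*cnj(C-A))"
  have dt: "dt \<noteq> 0" using tri unfolding collinear3_def dt_def .
  have dte: "dt = (Im B - Im A)*(Re C - Re A) - (Re B - Re A)*(Im C - Im A)" unfolding dt_def by (simp add: algebra_simps)
  have "p1 * dt = 0" using h unfolding dte by algebra
  moreover have "p2 * dt = 0" using h unfolding dte by algebra
  ultimately have "p1 = 0" "p2 = 0" using dt by auto
  then show ?thesis using h by simp
qed

lemma kap0_circle:
  assumes k0: "kap q = 0" and tri: "\<not> collinear3 A B C"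
    and z: "conic_eval q A = 0" "conic_eval q B = 0" "conic_eval q C = 0"
    and circ: "(cmod (B-Oc))^2 = (cmod (A-Oc))^2" "(cmod (C-Oc))^2 = (cmod (A-Oc))^2"
    and nz: "q \<noteq> (0,0,0,0,0,0)" and zX: "conic_eval q X = 0"
  shows "(cmod (X-Oc))^2 = (cmod (A-Oc))^2"
proof -
  obtain a b c d e f where q: "q = (a,b,c,d,e,f)" by (cases q) auto
  have ac: "c = a" "b = 0" using k0 unfolding q kap_def by (auto simp: complex_eq_iff)
  define R2 where "R2 = (cmod (A-Oc))^2"
  define p1 where "p1 = d + 2*a*Re Oc"
  define p2 where "p2 = e + 2*a*Im Oc"
  define p3 where "p3 = f - a*((Re Oc)^2 + (Im Oc)^2) + a * R2"
  have ev: "conic_eval q Z = a * ((cmod (Z-Oc))^2 - R2) + (p1 * Re Z + p2 * Im Z + p3)" for Z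
    unfolding q conic_eval_def ac p1_def p2_def p3_def cmod_power2 by (simp add: power2_eq_square algebra_simps)
  have "p1 * Re A + p2 * Im A + p3 = 0" using z(1) ev[of A] unfolding R2_def by simp
  moreover have "p1 * Re B + p2 * Im B + p3 = 0" using z(2) ev[of B] circ(1) unfolding R2_def by simp
  moreover have "p1 * Re C + p2 * Im C + p3 = 0" using z(3) ev[of C] circ(2) unfolding R2_def by simp
  ultimately have p0: "p1 = 0" "p2 = 0" "p3 = 0" using lin_zero[OF tri] by blast+
  have "a \<noteq> 0"
  proof
    assume "a = 0"
    then have "d = 0" "e = 0" "f = 0" using p0 unfolding p1_def p2_def p3_def by auto
    then show False using nz \<open>a = 0\<close> ac unfolding q by simp
  qed
  then show ?thesis using zX ev[of X] p0 unfolding R2_def by simp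
qed

lemma Im_kap: "Im (kap q * u^2) = (case q of (a,b,c,d,e,f) \<Rightarrow> (a-c)*Re u*Im u - (b/2)*((Re u)^2 - (Im u)^2))"
  by (cases q) (simp add: kap_def power2_eq_square algebra_simps)

lemma pd_iff: "principal_direction q u \<longleftrightarrow> u \<noteq> 0 \<and> Im (kap q * u^2) = 0"
proof -
  obtain a b c d e f where q: "q = (a,b,c,d,e,f)" by (cases q) auto
  define u1 where "u1 = Re u"
  define u2 where "u2 = Im u"
  have I: "Im (kap q * u^2) = (a-c)*u1*u2 - (b/2)*(u1^2 - u2^2)" unfolding Im_kap q u1_def u2_def by simp
  have inner: "(\<exists>k. a * u1 + (b/2) * u2 = k * u1 \<and> (b/2) * u1 + c * u2 = k * u2) \<longleftrightarrow> (a-c)*u1*u2 - (b/2)*(u1^2 - u2^2) = 0"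
    if "u \<noteq> 0"
  proof
    assume "\<exists>k. a * u1 + (b/2) * u2 = k * u1 \<and> (b/2) * u1 + c * u2 = k * u2"
    then obtain k where k: "a * u1 + (b/2) * u2 = k * u1" "(b/2) * u1 + c * u2 = k * u2" by blast
    have "(a * u1 + (b/2) * u2) * u2 = ((b/2) * u1 + c * u2) * u1" using k by (simp add: algebra_simps)
    then show "(a-c)*u1*u2 - (b/2)*(u1^2 - u2^2) = 0" by (simp add: power2_eq_square algebra_simps)
  next
    assume h: "(a-c)*u1*u2 - (b/2)*(u1^2 - u2^2) = 0"
    show "\<exists>k. a * u1 + (b/2) * u2 = k * u1 \<and> (b/2) * u1 + c * u2 = k * u2"
    proof (cases "u1 = 0")
      case True
      then have "u2 \<noteq> 0" using that unfolding u1_def u2_def by (simp add: complex_eq_iff)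
      moreover have "b * u2^2 = 0" using h True by (simp add: power2_eq_square)
      ultimately have "b = 0" by simp
      then show ?thesis using True by (intro exI[of _ c]) simp
    next
      case False
      show ?thesis
      proof (intro exI[of _ "(a * u1 + (b/2) * u2) / u1"] conjI)
        show "a * u1 + (b/2) * u2 = (a * u1 + (b/2) * u2) / u1 * u1" using False by simp
        have "((b/2) * u1 + c * u2) * u1 = (a * u1 + (b/2) * u2) * u2" using h by (simp add: power2_eq_square algebra_simps)
        then show "(b/2) * u1 + c * u2 = (a * u1 + (b/2) * u2) / u1 * u2" using False by (simp add: field_simps)
      qed
    qed
  qed
  have pd: "principal_direction q u \<longleftrightarrow> u \<noteq> 0 \<and> (\<exists>k. a * u1 + (b/2) * u2 = k * u1 \<and> (b/2) * u1 + c * u2 = k * u2)"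
    unfolding principal_direction_def q u1_def u2_def by simp
  show ?thesis unfolding pd I using inner by blast
qed

lemma poly2_coeffs:
  fixes a1 b1 c1 a2 b2 c2 :: real
  assumes "\<forall>t::real. a1*t^2 + b1*t + c1 = a2*t^2 + b2*t + c2"
  shows "a1 = a2 \<and> b1 = b2 \<and> c1 = c2"
proof -
  have "c1 = c2" using spec[OF assms, of 0] by simp
  moreover have "a1 + b1 + c1 = a2 + b2 + c2" using spec[OF assms, of 1] by simp
  moreover have "a1 - b1 + c1 = a2 - b2 + c2" using spec[OF assms, of "-1"] by simp
  ultimately show ?thesis by linarith
qed

lemma im_helper: "X * complex_of_real r = K * Y \<Longrightarrow> Im K = 0 \<Longrightarrow> Im X * r = Re K * Im Y"
  by (drule arg_cong[where f=Im]) simp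

lemma aux_zero:
  fixes I N K s t :: real
  shows "I * N = K * (2*s*t) \<Longrightarrow> N \<noteq> 0 \<Longrightarrow> K \<noteq> 0 \<Longrightarrow> (I = 0 \<longleftrightarrow> s = 0 \<or> t = 0)"
  by auto

lemma final_conic:
  assumes cen: "conic_central q" and k: "kap q \<noteq> 0" and zP: "conic_eval q P = 0" and PP: "P \<noteq> P'"
    and ev: "Im (kap q * (P'-P)^2) = 0"
  shows "(tangent_line q P P' \<or> line_through_center q P P') \<longleftrightarrow> on_major_or_minor_axis q P"
proof -
  obtain a b c d e f where q: "q = (a,b,c,d,e,f)" by (cases q) auto
  define dt where "dt = 4*a*c - b^2"
  have dt: "dt \<noteq> 0" using cen unfolding q conic_central_def dt_def by simp
  define x0 where "x0 = (b*e - 2*c*d)/dt"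
  define y0 where "y0 = (b*d - 2*a*e)/dt"
  define z0 where "z0 = Complex x0 y0"
  have cz0: "is_center q z0"
  proof -
    have xd: "x0 * dt = b*e - 2*c*d" "y0 * dt = b*d - 2*a*e" unfolding x0_def y0_def using dt by simp_all
    have "(2*a*x0 + b*y0 + d) * dt = 0" using xd unfolding dt_def by algebra
    moreover have "(b*x0 + 2*c*y0 + e) * dt = 0" using xd unfolding dt_def by algebra
    ultimately have "2*a*x0 + b*y0 + d = 0" "b*x0 + 2*c*y0 + e = 0" using dt by auto
    then show ?thesis unfolding is_center_def q z0_def by simp
  qed
  have cuniq: "z = z0" if "is_center q z" for z
  proof -
    have h: "2*a*Re z + b*Im z + d = 0" "b*Re z + 2*c*Im z + e = 0" using that unfolding is_center_def q by auto
    have "Re z * dt = b*e - 2*c*d" using h unfolding dt_def by algebra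
    moreover have "Im z * dt = b*d - 2*a*e" using h unfolding dt_def by algebra
    ultimately show ?thesis unfolding z0_def x0_def y0_def using dt by (simp add: complex_eq_iff field_simps)
  qed
  define w where "w = P' - P"
  define u where "u = P - z0"
  define w1 where "w1 = Re w"
  define w2 where "w2 = Im w"
  define u1 where "u1 = Re u"
  define u2 where "u2 = Im u"
  have w0: "w \<noteq> 0" using PP unfolding w_def by simp
  have nw: "w1^2 + w2^2 > 0" using w0 unfolding w1_def w2_def
    by (simp add: complex_eq_iff sum_power2_gt_zero_iff)
  define v1 where "v1 = a*w1 + (b/2)*w2"
  define v2 where "v2 = (b/2)*w1 + c*w2"
  have Ew: "v1*w2 - v2*w1 = 0" using ev unfolding Im_kap q w_def[symmetric] v1_def v2_def w1_def w2_def
    by (simp add: power2_eq_square algebra_simps)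
  define \<alpha> where "\<alpha> = a*w1^2 + b*w1*w2 + c*w2^2"
  have al: "\<alpha> = v1*w1 + v2*w2" unfolding \<alpha>_def v1_def v2_def by (simp add: power2_eq_square algebra_simps)
  have al0: "\<alpha> \<noteq> 0"
  proof
    assume "\<alpha> = 0"
    have "(v1^2+v2^2)*(w1^2+w2^2) = \<alpha>^2 + (v1*w2 - v2*w1)^2" unfolding al by algebra
    then have "(v1^2+v2^2)*(w1^2+w2^2) = 0" using Ew \<open>\<alpha> = 0\<close> by simp
    then have v0: "v1 = 0" "v2 = 0" using nw by (auto simp: sum_power2_eq_zero_iff)
    have "dt * w1 = 4*c*v1 - 2*b*v2" unfolding dt_def v1_def v2_def by (simp add: power2_eq_square algebra_simps)
    moreover have "dt * w2 = 4*a*v2 - 2*b*v1" unfolding dt_def v1_def v2_def by (simp add: power2_eq_square algebra_simps)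
    ultimately have "w1 = 0" "w2 = 0" using v0 dt by auto
    then show False using nw by simp
  qed
  define \<beta> where "\<beta> = 2*(u1*v1 + u2*v2)"
  have expand: "conic_eval q (P + complex_of_real t * (P' - P)) = \<alpha>*t^2 + \<beta>*t + 0" for t
  proof -
    have c1: "2*a*x0 + b*y0 + d = 0" "b*x0 + 2*c*y0 + e = 0" using cz0 unfolding is_center_def q z0_def by auto
    have P: "Re P = x0 + u1" "Im P = y0 + u2" unfolding u1_def u2_def u_def z0_def by simp_all
    have "conic_eval q (P + complex_of_real t * (P' - P)) = conic_eval q P + \<alpha>*t^2
       + ((2*a*Re P + b*Im P + d)*w1 + (b*Re P + 2*c*Im P + e)*w2)*t"
      unfolding q conic_eval_def \<alpha>_def w1_def w2_def w_def by (simp add: power2_eq_square algebra_simps)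
    also have "(2*a*Re P + b*Im P + d)*w1 + (b*Re P + 2*c*Im P + e)*w2 = \<beta>"
      unfolding P \<beta>_def v1_def v2_def using c1 by algebra
    finally show ?thesis using zP by simp
  qed
  have tang: "tangent_line q P P' \<longleftrightarrow> \<beta> = 0"
  proof
    assume "tangent_line q P P'"
    then obtain \<alpha>' \<beta>' \<gamma>' where h: "\<alpha>' \<noteq> 0" "\<forall>t::real. conic_eval q (P + of_real t * (P' - P)) = \<alpha>' * t^2 + \<beta>' * t + \<gamma>'"
        "\<beta>'^2 = 4 * \<alpha>' * \<gamma>'" unfolding tangent_line_def by blast
    have "\<forall>t::real. \<alpha>*t^2 + \<beta>*t + 0 = \<alpha>' * t^2 + \<beta>' * t + \<gamma>'" using h(2) expand by simp
    from poly2_coeffs[OF this] have "\<beta> = \<beta>'" "\<gamma>' = 0" by auto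
    then show "\<beta> = 0" using h(3) by simp
  next
    assume "\<beta> = 0"
    then show "tangent_line q P P'" unfolding tangent_line_def using PP al0 expand
      by (intro conjI exI[of _ \<alpha>] exI[of _ \<beta>] exI[of _ 0]) auto
  qed
  have lagr2: "(u1*v1 + u2*v2)*(w1^2+w2^2) = (u1*w1+u2*w2)*\<alpha> + (u1*w2 - u2*w1)*(v1*w2 - v2*w1)"
    unfolding al by algebra
  have tang2: "tangent_line q P P' \<longleftrightarrow> u1*w1+u2*w2 = 0"
  proof -
    have l: "(u1*v1 + u2*v2)*(w1^2+w2^2) = (u1*w1+u2*w2)*\<alpha>" using lagr2 Ew by simp
    have "\<beta> = 0 \<longleftrightarrow> u1*v1 + u2*v2 = 0" unfolding \<beta>_def by (metis mult_eq_0_iff zero_neq_numeral)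
    also have "\<dots> \<longleftrightarrow> (u1*v1 + u2*v2)*(w1^2+w2^2) = 0" using nw by (metis less_irrefl mult_eq_0_iff)
    also have "\<dots> \<longleftrightarrow> u1*w1+u2*w2 = 0" unfolding l using al0 by simp
    finally show ?thesis unfolding tang .
  qed
  have ltc: "line_through_center q P P' \<longleftrightarrow> u1*w2 - u2*w1 = 0"
  proof -
    have "line_through_center q P P' \<longleftrightarrow> collinear3 P P' z0"
      unfolding line_through_center_def using cz0 cuniq by blast
    also have "\<dots> \<longleftrightarrow> u1*w2 - u2*w1 = 0"
      unfolding collinear3_def u1_def u2_def w1_def w2_def u_def w_def by (simp add: algebra_simps) argo
    finally show ?thesis .
  qed
  have ax: "on_major_or_minor_axis q P \<longleftrightarrow> Im (kap q * u^2) = 0"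
  proof -
    have "on_major_or_minor_axis q P \<longleftrightarrow> (P = z0 \<or> principal_direction q (P - z0))"
      unfolding on_major_or_minor_axis_def using cz0 cuniq by blast
    also have "\<dots> \<longleftrightarrow> Im (kap q * u^2) = 0" unfolding pd_iff u_def by auto
    finally show ?thesis .
  qed
  have kw: "kap q * w^2 \<noteq> 0" using k w0 by simp
  have Rkw: "Re (kap q * w^2) \<noteq> 0" using kw ev unfolding w_def by (simp add: complex_eq_iff)
  have "kap q * u^2 * (w * cnj w)^2 = (kap q * w^2) * (u * cnj w)^2" by algebra
  then have "kap q * u^2 * complex_of_real ((w1^2+w2^2)^2) = (kap q * w^2) * (u * cnj w)^2"
    unfolding complex_mult_cnj w1_def w2_def by simp
  then have "Im (kap q * u^2) * (w1^2+w2^2)^2 = Re (kap q * w^2) * Im ((u * cnj w)^2)"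
    using ev unfolding w_def[symmetric] by (rule im_helper)
  moreover have "Im ((u * cnj w)^2) = 2 * (u1*w1+u2*w2) * (u2*w1 - u1*w2)"
    unfolding u1_def u2_def w1_def w2_def by (simp add: power2_eq_square algebra_simps)
  ultimately have "Im (kap q * u^2) * (w1^2+w2^2)^2 = Re (kap q * w^2) * (2 * (u1*w1+u2*w2) * (u2*w1 - u1*w2))"
    by simp
  moreover have "(w1^2+w2^2)^2 \<noteq> 0" using nw by (metis less_irrefl power_zero_numeral zero_less_power2)
  ultimately have "Im (kap q * u^2) = 0 \<longleftrightarrow> (u1*w1+u2*w2 = 0 \<or> u2*w1 - u1*w2 = 0)"
    using aux_zero Rkw by blast
  then have "Im (kap q * u^2) = 0 \<longleftrightarrow> (u1*w1+u2*w2 = 0 \<or> u1*w2 - u2*w1 = 0)"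
    by argo
  then show ?thesis unfolding tang2 ltc ax by blast
qed

lemma conic_through_nz: "conic_eval q X \<noteq> 0 \<Longrightarrow> q \<noteq> (0,0,0,0,0,0)"
  using conic_zero_eval by blast

lemma four_pts_absurd:
  assumes tri: "\<not> collinear3 A B C" and off: "off_sidelines A B C P"
    and q: "is_the_conic q {A, B, C, P}"
  shows False
proof -
  define X1 where "X1 = 2*B - A"
  define X2 where "X2 = 2*C - A"
  define tt where "tt = Im ((B-A)*cnj(C-A))"
  define oa where "oa = Im ((B-A)*cnj(P-A))"
  define ob where "ob = Im ((A-C)*cnj(P-C))"
  have t: "tt \<noteq> 0" using tri unfolding collinear3_def tt_def .
  have o1: "oa \<noteq> 0" using off unfolding off_sidelines_def collinear3_def oa_def by simp
  have o2: "ob \<noteq> 0" using off unfolding off_sidelines_def collinear3_def ob_def by simp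
  have e1: "Lf A B X1 = 0" "Lf A C X1 = 2 * tt" "Lf B P X1 = oa"
    unfolding Lf_def X1_def tt_def oa_def by (simp_all add: algebra_simps)
  have e2: "Lf A C X2 = 0" "Lf A B X2 = - 2 * tt" "Lf C P X2 = - ob"
    unfolding Lf_def X2_def tt_def ob_def by (simp_all add: algebra_simps)
  define q1 where "q1 = LL A B C P"
  define q2 where "q2 = LL A C B P"
  have q1X1: "conic_eval q1 X1 = 0" unfolding q1_def eval_LL e1 by simp
  have q1X2: "conic_eval q1 X2 \<noteq> 0" unfolding q1_def eval_LL e2 using t o2 by simp
  have q2X1: "conic_eval q2 X1 \<noteq> 0" unfolding q2_def eval_LL e1 using t o1 by simp
  have q2X2: "conic_eval q2 X2 = 0" unfolding q2_def eval_LL e2 by simp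
  have "conic_through q1 {A, B, C, P}" unfolding conic_through_def
    using conic_through_nz[OF q1X2] by (simp add: q1_def eval_LL Lf_self1 Lf_self2)
  then obtain k1 where k1: "q1 = conic_scale k1 q" using q unfolding is_the_conic_def by blast
  have "conic_through q2 {A, B, C, P}" unfolding conic_through_def
    using conic_through_nz[OF q2X1] by (simp add: q2_def eval_LL Lf_self1 Lf_self2)
  then obtain k2 where k2: "q2 = conic_scale k2 q" using q unfolding is_the_conic_def by blast
  have "conic_eval q X1 \<noteq> 0" using q2X1 unfolding k2 eval_scale by simp
  then have "k1 = 0" using q1X1 unfolding k1 eval_scale by simp
  then show False using q1X2 unfolding k1 eval_scale by simp
qed

lemma Im0_cnj: "Im z = 0 \<Longrightarrow> z = cnj z"
  by (simp add: complex_eq_iff)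

lemma unit_mult_cnj: "cmod u = 1 \<Longrightarrow> u * cnj u = 1"
  using unit_cnj[of u] by (auto simp: field_simps)

lemma N1_half:
  assumes ua: "a * cnj a = 1" and ub: "b * cnj b = 1" and uc: "c * cnj c = 1" and up: "p * cnj p = 1"
    and h: "Im ((b-a)*(c-a)*cnj((p-a)*(q-a))) = 0"
  shows "(p-a)*(b-a)*(c-a)*(p*q + a*b*c*cnj q - a*p - b*c) = 0"
proof -
  have "(b-a)*(c-a)*cnj((p-a)*(q-a)) = cnj ((b-a)*(c-a)*cnj((p-a)*(q-a)))" using Im0_cnj[OF h] .
  then have e: "(b-a)*(c-a)*((cnj p - cnj a)*(cnj q-cnj a)) = (cnj b-cnj a)*(cnj c-cnj a)*((p-a)*(q-a))" by simp
  show ?thesis using e ua ub uc up by algebra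
qed

lemma N1:
  assumes ua: "cmod a = 1" and ub: "cmod b = 1" and uc: "cmod c = 1" and up: "cmod p = 1"
    and hA: "Im ((b-a)*(c-a)*cnj((p-a)*(q-a))) = 0"
    and hB: "Im ((c-b)*(a-b)*cnj((p-b)*(q-b))) = 0"
    and d: "a \<noteq> b" "a \<noteq> c" "b \<noteq> c" "p \<noteq> a" "p \<noteq> b"
  shows "p = c"
proof -
  note u = unit_mult_cnj[OF ua] unit_mult_cnj[OF ub] unit_mult_cnj[OF uc] unit_mult_cnj[OF up]
  have "(p-a)*(b-a)*(c-a)*(p*q + a*b*c*cnj q - a*p - b*c) = 0" by (rule N1_half[OF u hA])
  then have 1: "p*q + a*b*c*cnj q - a*p - b*c = 0" using d by simp
  have "(p-b)*(c-b)*(a-b)*(p*q + b*c*a*cnj q - b*p - c*a) = 0" by (rule N1_half[OF u(2,3,1,4) hB])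
  then have 2: "p*q + b*c*a*cnj q - b*p - c*a = 0" using d by simp
  have "(a-b)*(p-c) = 0" using 1 2 by algebra
  then show ?thesis using d by simp
qed

lemma N2:
  assumes ua: "cmod a = 1" and ub: "cmod b = 1" and uc: "cmod c = 1" and ud: "cmod d = 1"
    and h: "Im ((a-c)*(b-c)*cnj((d-c)*w)) = 0"
    and dd: "a \<noteq> c" "b \<noteq> c" "d \<noteq> c"
  shows "d*w = - a*b*c*cnj w"
proof -
  note u = unit_mult_cnj[OF ua] unit_mult_cnj[OF ub] unit_mult_cnj[OF uc] unit_mult_cnj[OF ud]
  have "(a-c)*(b-c)*cnj((d-c)*w) = cnj ((a-c)*(b-c)*cnj((d-c)*w))" using Im0_cnj[OF h] .
  then have e: "(a-c)*(b-c)*((cnj d - cnj c)*cnj w) = (cnj a-cnj c)*(cnj b-cnj c)*((d-c)*w)" by simp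
  have "(a-c)*(b-c)*(c-d)*(a*b*c*cnj w + d*w) = 0" using e u by algebra
  then have "a*b*c*cnj w + d*w = 0" using dd by simp
  then show ?thesis by (simp add: algebra_simps eq_neg_iff_add_eq_0)
qed

lemma N3:
  assumes ua: "cmod a = 1" and ub: "cmod b = 1" and ud: "cmod d = 1"
    and dd: "a \<noteq> b" "d \<noteq> a" "d \<noteq> b"
  shows "Im ((d-a)*cnj(b-a)) \<noteq> 0"
proof
  assume h: "Im ((d-a)*cnj(b-a)) = 0"
  note u = unit_mult_cnj[OF ua] unit_mult_cnj[OF ub] unit_mult_cnj[OF ud]
  have "(d-a)*cnj(b-a) = cnj ((d-a)*cnj(b-a))" using Im0_cnj[OF h] .
  then have e: "(d-a)*(cnj b - cnj a) = (cnj d - cnj a)*(b-a)" by simp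
  have "(b-a)*(a-d)*(b-d) = 0" using e u by algebra
  then show False using dd by simp
qed

lemma N4:
  assumes ud: "cmod d = 1" and ud': "cmod d' = 1" and w: "w \<noteq> 0"
    and h: "Im ((d'-d)*cnj w) = 0" and t: "d' = d \<longrightarrow> Re (d * cnj w) = 0"
    and dw: "d*w = - a*b*c*cnj w"
  shows "a*b*c*d'*(cnj w)^2 = w^2"
proof (cases "d' = d")
  case True
  have u: "d * cnj d = 1" by (rule unit_mult_cnj[OF ud])
  have "Re (d * cnj w) = 0" using t True by simp
  then have "d * cnj w + cnj d * w = 0" by (simp add: complex_eq_iff)
  then have "d*d*cnj w + w = 0" using u by algebra
  then show ?thesis using True dw by algebra
next
  case False
  note u = unit_mult_cnj[OF ud] unit_mult_cnj[OF ud']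
  have "(d'-d)*cnj w = cnj ((d'-d)*cnj w)" using Im0_cnj[OF h] .
  then have e: "(d'-d)*cnj w = (cnj d' - cnj d)*w" by simp
  have "(d'-d)*(cnj w*d*d' + w) = 0" using e u by algebra
  then have "cnj w*d*d' + w = 0" using False by simp
  then show ?thesis using dw by algebra
qed

definition Econ :: "complex \<Rightarrow> complex \<Rightarrow> complex \<Rightarrow> complex \<Rightarrow> complex \<Rightarrow> conic" where
  "Econ A B C P P' = cadd3
     (conic_scale ((cmod (C-B))^2 * (Lf C A P * Lf A B P' - Lf A B P * Lf C A P')) (LL C A A B))
     (conic_scale ((cmod (A-C))^2 * (Lf A B P * Lf B C P' - Lf B C P * Lf A B P')) (LL A B B C))
     (conic_scale ((cmod (B-A))^2 * (Lf B C P * Lf C A P' - Lf C A P * Lf B C P')) (LL B C C A))"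

lemma eval_Econ: "conic_eval (Econ A B C P P') X =
    (cmod (C-B))^2 * (Lf C A P * Lf A B P' - Lf A B P * Lf C A P') * (Lf C A X * Lf A B X)
  + (cmod (A-C))^2 * (Lf A B P * Lf B C P' - Lf B C P * Lf A B P') * (Lf A B X * Lf B C X)
  + (cmod (B-A))^2 * (Lf B C P * Lf C A P' - Lf C A P * Lf B C P') * (Lf B C X * Lf C A X)"
  unfolding Econ_def eval_cadd3 eval_scale eval_LL ..

lemma Ezero:
  fixes x1 x2 x3 y1 y2 y3 l1 l2 l3 :: real
  assumes "x3*y3*l2 = x2*y2*l3" "x1*y1*l3 = x3*y3*l1" "x2*y2*l1 = x1*y1*l2"
  shows "l1*(x2*y3 - x3*y2)*(x2*x3) + l2*(x3*y1 - x1*y3)*(x3*x1) + l3*(x1*y2 - x2*y1)*(x1*x2) = 0"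
    "l1*(x2*y3 - x3*y2)*(y2*y3) + l2*(x3*y1 - x1*y3)*(y3*y1) + l3*(x1*y2 - x2*y1)*(y1*y2) = 0"
  using assms by algebra+

lemma ncross:
  fixes x1 x2 x3 y1 y2 y3 K :: real
  assumes "x1+x2+x3 = K" "y1+y2+y3 = K"
  shows "(x3*y1 - x1*y3) - (x1*y2 - x2*y1) = K*(y1 - x1)"
    "(x1*y2 - x2*y1) - (x2*y3 - x3*y2) = K*(y2 - x2)"
    "(x2*y3 - x3*y2) - (x3*y1 - x1*y3) = K*(y3 - x3)"
proof -
  have e: "x3 = K - x1 - x2" "y3 = K - y1 - y2" using assms by linarith+
  show "(x3*y1 - x1*y3) - (x1*y2 - x2*y1) = K*(y1 - x1)" unfolding e by algebra
  show "(x1*y2 - x2*y1) - (x2*y3 - x3*y2) = K*(y2 - x2)" unfolding e by algebra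
  show "(x2*y3 - x3*y2) - (x3*y1 - x1*y3) = K*(y3 - x3)" unfolding e by algebra
qed

lemma par_par:
  assumes "Im (w * cnj u) = 0" "Im (w * cnj v) = 0" "w \<noteq> 0"
  shows "Im (u * cnj v) = 0"
proof -
  have h: "Im w * Re u - Re w * Im u = 0" "Im w * Re v - Re w * Im v = 0" using assms(1,2) by (simp_all add: algebra_simps)
  have "(Im u * Re v - Re u * Im v) * Re w = 0" using h by algebra
  moreover have "(Im u * Re v - Re u * Im v) * Im w = 0" using h by algebra
  ultimately have "Im u * Re v - Re u * Im v = 0" using assms(3) by (auto simp: complex_eq_iff)
  then show ?thesis by (simp add: algebra_simps)
qed

lemma col_cyc: "collinear3 A B C \<longleftrightarrow> collinear3 B C A"
  unfolding collinear3_def by (simp add: algebra_simps)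

lemma side_point:
  assumes tri: "\<not> collinear3 A B C"
  shows "Lf A B (2*B - A) = 0" "Lf B C (2*B - A) \<noteq> 0" "Lf C A (2*B - A) \<noteq> 0"
proof -
  define tt where "tt = Im ((B-A)*cnj(C-A))"
  have t: "tt \<noteq> 0" using tri unfolding collinear3_def tt_def .
  show "Lf A B (2*B - A) = 0" unfolding Lf_def by (simp add: algebra_simps)
  have "Lf B C (2*B - A) = tt" unfolding Lf_def tt_def by (simp add: algebra_simps)
  then show "Lf B C (2*B - A) \<noteq> 0" using t by simp
  have "Lf C A (2*B - A) = - 2 * tt" unfolding Lf_def tt_def by (simp add: algebra_simps)
  then show "Lf C A (2*B - A) \<noteq> 0" using t by simp
qed

lemma E_through:
  assumes tri: "\<not> collinear3 A B C" and PP: "P \<noteq> P'"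
    and hA: "Lf A B P * Lf A B P' * (cmod (A-C))^2 = Lf C A P * Lf C A P' * (cmod (B-A))^2"
    and hB: "Lf B C P * Lf B C P' * (cmod (B-A))^2 = Lf A B P * Lf A B P' * (cmod (C-B))^2"
    and hC: "Lf C A P * Lf C A P' * (cmod (C-B))^2 = Lf B C P * Lf B C P' * (cmod (A-C))^2"
  shows "conic_through (Econ A B C P P') {A, B, C, P, P'}"
proof -
  define x1 where "x1 = Lf B C P"
  define x2 where "x2 = Lf C A P"
  define x3 where "x3 = Lf A B P"
  define y1 where "y1 = Lf B C P'"
  define y2 where "y2 = Lf C A P'"
  define y3 where "y3 = Lf A B P'"
  define l1 where "l1 = (cmod (C-B))^2"
  define l2 where "l2 = (cmod (A-C))^2"
  define l3 where "l3 = (cmod (B-A))^2"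
  define K where "K = Lf A B C"
  have K: "K \<noteq> 0" using tri unfolding K_def Lf_def collinear3_def by (simp add: algebra_simps)
  have sx: "x1+x2+x3 = K" and sy: "y1+y2+y3 = K" unfolding x1_def x2_def x3_def y1_def y2_def y3_def K_def
    by (rule Lsum)+
  have ev: "conic_eval (Econ A B C P P') X = l1*(x2*y3 - x3*y2)*(Lf C A X * Lf A B X)
     + l2*(x3*y1 - x1*y3)*(Lf A B X * Lf B C X) + l3*(x1*y2 - x2*y1)*(Lf B C X * Lf C A X)" for X
    unfolding eval_Econ x1_def x2_def x3_def y1_def y2_def y3_def l1_def l2_def l3_def ..
  have rel: "x3*y3*l2 = x2*y2*l3" "x1*y1*l3 = x3*y3*l1" "x2*y2*l1 = x1*y1*l2"
    using hA hB hC unfolding x1_def x2_def x3_def y1_def y2_def y3_def l1_def l2_def l3_def by simp_all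
  have zP: "conic_eval (Econ A B C P P') P = 0"
    unfolding ev using Ezero(1)[OF rel] unfolding x1_def x2_def x3_def by (simp add: algebra_simps)
  have zP': "conic_eval (Econ A B C P P') P' = 0"
    unfolding ev using Ezero(2)[OF rel] unfolding y1_def y2_def y3_def by (simp add: algebra_simps)
  have zABC: "conic_eval (Econ A B C P P') A = 0" "conic_eval (Econ A B C P P') B = 0" "conic_eval (Econ A B C P P') C = 0"
    unfolding ev by (simp_all add: Lf_self1 Lf_self2)
  have AB: "A \<noteq> B" "B \<noteq> C" "C \<noteq> A" using tri unfolding collinear3_def by (auto simp: algebra_simps)
  have lpos: "l1 > 0" "l2 > 0" "l3 > 0" unfolding l1_def l2_def l3_def using AB by auto
  have n0: "\<not> (x2*y3 - x3*y2 = 0 \<and> x3*y1 - x1*y3 = 0 \<and> x1*y2 - x2*y1 = 0)"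
  proof
    assume n: "x2*y3 - x3*y2 = 0 \<and> x3*y1 - x1*y3 = 0 \<and> x1*y2 - x2*y1 = 0"
    have "K*(y2 - x2) = 0" "K*(y3 - x3) = 0" using ncross[OF sx sy] n by simp_all
    then have d: "y2 - x2 = 0" "y3 - x3 = 0" using K by simp_all
    have "y2 - x2 = Im ((P'-P) * cnj (A-C))" "y3 - x3 = Im ((P'-P) * cnj (B-A))"
      unfolding x2_def y2_def x3_def y3_def Lf_def by (simp_all add: algebra_simps)
    then have "Im ((B-A) * cnj (A-C)) = 0" using par_par[of "P'-P" "B-A" "A-C"] d PP by simp
    then show False using tri unfolding collinear3_def by (simp add: algebra_simps)
  qed
  have tri2: "\<not> collinear3 B C A" "\<not> collinear3 C A B" using tri col_cyc by blast+
  have "\<exists>X. conic_eval (Econ A B C P P') X \<noteq> 0"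
  proof (cases "x1*y2 - x2*y1 = 0")
    case False
    note s = side_point[OF tri]
    show ?thesis by (rule exI[of _ "2*B - A"]) (use False in \<open>simp add: ev s lpos less_imp_neq[symmetric]\<close>)
  next
    case c3: True
    show ?thesis
    proof (cases "x2*y3 - x3*y2 = 0")
      case False
      note s = side_point[OF tri2(1)]
      show ?thesis by (rule exI[of _ "2*C - B"]) (use False in \<open>simp add: ev s lpos less_imp_neq[symmetric]\<close>)
    next
      case True
      then have F: "x3*y1 - x1*y3 \<noteq> 0" using n0 c3 by simp
      note s = side_point[OF tri2(2)]
      show ?thesis by (rule exI[of _ "2*A - C"]) (use F in \<open>simp add: ev s lpos less_imp_neq[symmetric]\<close>)
    qed
  qed
  then have "Econ A B C P P' \<noteq> (0,0,0,0,0,0)" using conic_zero_eval by blast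
  then show ?thesis unfolding conic_through_def using zP zP' zABC by simp
qed

lemma sc_diff: "(Oc + complex_of_real r * x) - (Oc + complex_of_real r * y) = complex_of_real r * (x - y)"
  by (simp add: algebra_simps)

lemma Re_ofreal_mult: "Re (complex_of_real r * z) = r * Re z" by simp

lemma br4: "Im ((complex_of_real r * x1)*(complex_of_real r * x2)*cnj((complex_of_real r * x3)*(complex_of_real r * x4)))
   = r^4 * Im (x1*x2*cnj(x3*x4))"
proof -
  have "(complex_of_real r * x1)*(complex_of_real r * x2)*cnj((complex_of_real r * x3)*(complex_of_real r * x4))
     = complex_of_real r ^ 4 * (x1*x2*cnj(x3*x4))"
    by (simp only: complex_cnj_mult complex_cnj_complex_of_real) algebra
  then show ?thesis by (simp only: of_real_power[symmetric] Im_ofreal_mult)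
qed

lemma br3: "Im ((complex_of_real r * x1)*(complex_of_real r * x2)*cnj((complex_of_real r * x3)*w))
   = r^3 * Im (x1*x2*cnj(x3*w))"
proof -
  have "(complex_of_real r * x1)*(complex_of_real r * x2)*cnj((complex_of_real r * x3)*w)
     = complex_of_real r ^ 3 * (x1*x2*cnj(x3*w))"
    by (simp only: complex_cnj_mult complex_cnj_complex_of_real) algebra
  then show ?thesis by (simp only: of_real_power[symmetric] Im_ofreal_mult)
qed

lemma br2: "Im ((complex_of_real r * x1)*cnj(complex_of_real r * x2)) = r^2 * Im (x1*cnj x2)"
proof -
  have "(complex_of_real r * x1)*cnj(complex_of_real r * x2) = complex_of_real r ^ 2 * (x1*cnj x2)"
    by (simp only: complex_cnj_mult complex_cnj_complex_of_real) algebra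
  then show ?thesis by (simp only: of_real_power[symmetric] Im_ofreal_mult)
qed

lemma br1: "Im ((complex_of_real r * x1)*cnj w) = r * Im (x1*cnj w)"
  "Re ((complex_of_real r * x1)*cnj w) = r * Re (x1*cnj w)"
  by (simp_all only: mult.assoc Im_ofreal_mult Re_ofreal_mult)

theorem theorem1p3:
  fixes A B C Oc P P' D D' :: complex and Q1 Q2 :: conic
  assumes tri: "\<not> collinear3 A B C"
    and circ: "cmod (B - Oc) = cmod (A - Oc)" "cmod (C - Oc) = cmod (A - Oc)"
    and iso: "isogonal_conjugates A B C P P'" and PP': "P \<noteq> P'"
    and Q1: "is_the_conic Q1 {A, B, C, P, P'}"
    and D: "cmod (D - Oc) = cmod (A - Oc)" "conic_eval Q1 D = 0" "D \<notin> {A, B, C}"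
    and D': "cmod (D' - Oc) = cmod (A - Oc)" "collinear3 D D' (D + (P' - P))"
            "D' = D \<longrightarrow> Re ((D - Oc) * cnj (P' - P)) = 0"
    and Q2: "is_the_conic Q2 {A, B, C, D', P}"
    and Q2_central: "conic_nondegenerate Q2" "conic_central Q2"
  shows "(tangent_line Q2 P P' \<or> line_through_center Q2 P P') \<longleftrightarrow> on_major_or_minor_axis Q2 P"
proof -
  have AB: "A \<noteq> B" "B \<noteq> C" "C \<noteq> A" using tri unfolding collinear3_def by (auto simp: algebra_simps)
  have tri2: "\<not> collinear3 B C A" "\<not> collinear3 C A B" using tri col_cyc by blast+
  define R where "R = cmod (A - Oc)"
  have R: "R > 0"
  proof -
    have "R \<noteq> 0"
    proof
      assume "R = 0"
      then have "A = Oc" "B = Oc" using circ(1) unfolding R_def by auto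
      then show False using AB by simp
    qed
    then show ?thesis unfolding R_def by simp
  qed
  have Rc: "complex_of_real R \<noteq> 0" using R by simp
  define nz where "nz = (\<lambda>X. (X - Oc) / complex_of_real R)"
  have eqX: "X = Oc + complex_of_real R * nz X" for X unfolding nz_def using Rc by simp
  have unX: "cmod (nz X) = 1" if "cmod (X - Oc) = R" for X
    unfolding nz_def using that R by (simp add: norm_divide)
  define a where "a = nz A"
  define b where "b = nz B"
  define c where "c = nz C"
  define d where "d = nz D"
  define d1 where "d1 = nz D'"
  define p where "p = nz P"
  define q where "q = nz P'"
  have Aeq: "A = Oc + complex_of_real R * a" unfolding a_def by (rule eqX)
  have Beq: "B = Oc + complex_of_real R * b" unfolding b_def by (rule eqX)
  have Ceq: "C = Oc + complex_of_real R * c" unfolding c_def by (rule eqX)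
  have Deq: "D = Oc + complex_of_real R * d" unfolding d_def by (rule eqX)
  have D1eq: "D' = Oc + complex_of_real R * d1" unfolding d1_def by (rule eqX)
  have Peq: "P = Oc + complex_of_real R * p" unfolding p_def by (rule eqX)
  have P1eq: "P' = Oc + complex_of_real R * q" unfolding q_def by (rule eqX)
  have ua: "cmod a = 1" unfolding a_def by (rule unX) (simp add: R_def)
  have ub: "cmod b = 1" unfolding b_def by (rule unX) (simp add: R_def circ)
  have uc: "cmod c = 1" unfolding c_def by (rule unX) (simp add: R_def circ)
  have ud: "cmod d = 1" unfolding d_def by (rule unX) (simp add: R_def D)
  have ud1: "cmod d1 = 1" unfolding d1_def by (rule unX) (simp add: R_def D')
  have inj: "X = Y \<longleftrightarrow> nz X = nz Y" for X Y unfolding nz_def using Rc by (auto simp: divide_cancel_right)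
  have abc: "a \<noteq> b" "b \<noteq> c" "c \<noteq> a" using AB inj unfolding a_def b_def c_def by auto
  define w where "w = P' - P"
  have w0: "w \<noteq> 0" using PP' unfolding w_def by simp
  have offP: "off_sidelines A B C P" and iA: "isogonal_at A B C P P'" and iB: "isogonal_at B C A P P'"
    and iC: "isogonal_at C A B P P'" using iso unfolding isogonal_conjugates_def by auto
  have IA: "Im ((B-A)*(C-A)*cnj((P-A)*(P'-A))) = 0" using iso_im[OF tri] iA by blast
  have IB: "Im ((C-B)*(A-B)*cnj((P-B)*(P'-B))) = 0" using iso_im[OF tri2(1)] iB by blast
  have IC: "Im ((A-C)*(B-C)*cnj((P-C)*(P'-C))) = 0" using iso_im[OF tri2(2)] iC by blast
  have PA: "P \<noteq> A" "P \<noteq> B" "P \<noteq> C" using offP unfolding off_sidelines_def collinear3_def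
    by (auto simp: algebra_simps)
  have Pnc: "cmod (P - Oc) \<noteq> R"
  proof
    assume "cmod (P - Oc) = R"
    then have up: "cmod p = 1" unfolding p_def by (rule unX)
    have "R^4 * Im ((b-a)*(c-a)*cnj((p-a)*(q-a))) = 0"
      using IA unfolding Aeq Beq Ceq Peq P1eq sc_diff br4 .
    then have hA: "Im ((b-a)*(c-a)*cnj((p-a)*(q-a))) = 0" using R by simp
    have "R^4 * Im ((c-b)*(a-b)*cnj((p-b)*(q-b))) = 0"
      using IB unfolding Aeq Beq Ceq Peq P1eq sc_diff br4 .
    then have hB: "Im ((c-b)*(a-b)*cnj((p-b)*(q-b))) = 0" using R by simp
    have "p \<noteq> a" "p \<noteq> b" using PA inj unfolding p_def a_def b_def by auto
    then have "p = c" using N1[OF ua ub uc up hA hB] abc by auto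
    then show False using PA inj unfolding p_def c_def by auto
  qed
  have hA: "Lf A B P * Lf A B P' * (cmod (A-C))^2 = Lf C A P * Lf C A P' * (cmod (B-A))^2"
    using iso_prod[OF tri, of P P'] IA Lf_swap[of C A] norm_minus_commute[of A C] by simp
  have hB: "Lf B C P * Lf B C P' * (cmod (B-A))^2 = Lf A B P * Lf A B P' * (cmod (C-B))^2"
    using iso_prod[OF tri2(1), of P P'] IB Lf_swap[of A B] norm_minus_commute[of A B] by simp
  have hC: "Lf C A P * Lf C A P' * (cmod (C-B))^2 = Lf B C P * Lf B C P' * (cmod (A-C))^2"
    using iso_prod[OF tri2(2), of P P'] IC Lf_swap[of B C] norm_minus_commute[of B C] by simp
  have Eth: "conic_through (Econ A B C P P') {A, B, C, P, P'}" by (rule E_through[OF tri PP' hA hB hC])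
  then obtain k where "Econ A B C P P' = conic_scale k Q1" using Q1 unfolding is_the_conic_def by blast
  then have ED: "conic_eval (Econ A B C P P') D = 0" using D(2) by (simp add: eval_scale)
  define x1 where "x1 = Lf B C P"
  define x2 where "x2 = Lf C A P"
  define x3 where "x3 = Lf A B P"
  define y1 where "y1 = Lf B C P'"
  define y2 where "y2 = Lf C A P'"
  define y3 where "y3 = Lf A B P'"
  define l1 where "l1 = (cmod (C-B))^2"
  define l2 where "l2 = (cmod (A-C))^2"
  define l3 where "l3 = (cmod (B-A))^2"
  define K where "K = Lf A B C"
  have K: "K \<noteq> 0" using tri unfolding K_def Lf_def collinear3_def by (simp add: algebra_simps)
  have sx: "x1+x2+x3 = K" and sy: "y1+y2+y3 = K" unfolding x1_def x2_def x3_def y1_def y2_def y3_def K_def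
    by (rule Lsum)+
  define m1 where "m1 = l1 * (Lf C A D * Lf A B D)"
  define m2 where "m2 = l2 * (Lf A B D * Lf B C D)"
  define m3 where "m3 = l3 * (Lf B C D * Lf C A D)"
  have sm: "m1 + m2 + m3 = 0" unfolding m1_def m2_def m3_def l1_def l2_def l3_def
    using circ_ident[of B Oc A C D] circ D(1) by (simp add: algebra_simps)
  have nm: "(x2*y3 - x3*y2)*m1 + (x3*y1-x1*y3)*m2 + (x1*y2-x2*y1)*m3 = 0"
    using ED unfolding eval_Econ m1_def m2_def m3_def x1_def x2_def x3_def y1_def y2_def y3_def l1_def l2_def l3_def
    by (simp add: algebra_simps)
  have cr: "K*((y1-x1)*m2 - (y2-x2)*m1) = 0" by (rule cross_lemma[OF sx sy sm nm])
  have DAB: "D \<noteq> A" "D \<noteq> B" "D \<noteq> C" using D(3) by auto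
  have dabc: "d \<noteq> a" "d \<noteq> b" "d \<noteq> c" using DAB inj unfolding a_def b_def c_def d_def by auto
  have LcD: "Lf A B D \<noteq> 0"
  proof -
    have "Lf A B D = R^2 * Im ((d-a)*cnj(b-a))" unfolding Lf_def Aeq Beq Deq sc_diff br2 ..
    then show ?thesis using N3[OF ua ub ud abc(1) dabc(1,2)] R by simp
  qed
  have "(y1-x1)*(l2 * Lf B C D) = (y2-x2)*(l1 * Lf C A D)"
  proof -
    have "(y1-x1)*m2 = (y2-x2)*m1" using cr K by simp
    then have "Lf A B D * ((y1-x1)*(l2 * Lf B C D)) = Lf A B D * ((y2-x2)*(l1 * Lf C A D))"
      unfolding m1_def m2_def by (simp add: algebra_simps)
    then show ?thesis using LcD by simp
  qed
  moreover have "y1 - x1 = - Lf C B (C + w)" "y2 - x2 = Lf C A (C + w)"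
    unfolding x1_def y1_def x2_def y2_def w_def Lf_def by (simp_all add: algebra_simps)
  ultimately have "Lf C A D * Lf C A (C + w) * (cmod (B-C))^2 = Lf C B D * Lf C B (C + w) * (cmod (A-C))^2"
    unfolding l1_def l2_def using Lf_swap[of C B D] norm_minus_commute[of B C] by (simp add: algebra_simps)
  then have "Im ((A-C)*(B-C)*cnj((D-C)*(C + w - C))) = 0" using iso_prod[OF tri2(2), of D "C + w"] by simp
  then have "Im ((A-C)*(B-C)*cnj((D-C)*w)) = 0" by simp
  then have "R^3 * Im ((a-c)*(b-c)*cnj((d-c)*w)) = 0" unfolding Aeq Beq Ceq Deq sc_diff br3 .
  then have "Im ((a-c)*(b-c)*cnj((d-c)*w)) = 0" using R by simp
  then have dw: "d*w = - a*b*c*cnj w" using N2[OF ua ub uc ud] abc dabc by auto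
  have "Im ((D'-D)*cnj(D + (P'-P) - D)) = 0" using D'(2) unfolding collinear3_def .
  then have "Im ((D'-D)*cnj w) = 0" unfolding w_def by simp
  then have "R * Im ((d1-d)*cnj w) = 0" unfolding D1eq Deq sc_diff br1 .
  then have h1: "Im ((d1-d)*cnj w) = 0" using R by simp
  have h2: "d1 = d \<longrightarrow> Re (d * cnj w) = 0"
  proof
    assume "d1 = d"
    then have "D' = D" using inj unfolding d1_def d_def by auto
    then have "Re ((D - Oc) * cnj w) = 0" using D'(3) unfolding w_def by simp
    moreover have "D - Oc = complex_of_real R * d" using Deq by simp
    ultimately have "R * Re (d * cnj w) = 0" by (simp only: br1)
    then show "Re (d * cnj w) = 0" using R by simp
  qed
  have key: "a*b*c*d1*(cnj w)^2 = w^2" by (rule N4[OF ud ud1 w0 h1 h2 dw])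
  have D1n: "D' \<notin> {A, B, C}"
  proof
    assume "D' \<in> {A, B, C}"
    then have "{A, B, C, D', P} = {A, B, C, P}" by auto
    then show False using four_pts_absurd[OF tri offP] Q2 by simp
  qed
  then have d1n: "d1 \<noteq> a" "d1 \<noteq> b" "d1 \<noteq> c" using inj unfolding a_def b_def c_def d1_def by auto
  have Q2t: "conic_through Q2 {A, B, C, D', P}" using Q2 unfolding is_the_conic_def by blast
  then have Q2z: "conic_eval Q2 A = 0" "conic_eval Q2 B = 0" "conic_eval Q2 C = 0" "conic_eval Q2 D' = 0"
    "conic_eval Q2 P = 0" and Q2nz: "Q2 \<noteq> (0,0,0,0,0,0)" unfolding conic_through_def by auto
  have lau: "cnj (kap Q2) = kap Q2 * a * b * c * d1"
    by (rule laurent[OF R ua ub uc ud1 abc(1) abc(3)[symmetric] d1n(1)[symmetric] abc(2) d1n(2)[symmetric] d1n(3)[symmetric]])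
       (use Q2z Aeq Beq Ceq D1eq in auto)
  have k0: "kap Q2 \<noteq> 0"
  proof
    assume "kap Q2 = 0"
    then have "(cmod (P-Oc))^2 = (cmod (A-Oc))^2"
      using kap0_circle[OF _ tri Q2z(1-3) _ _ Q2nz Q2z(5)] circ by simp
    then show False using Pnc unfolding R_def by (simp add: power2_eq_iff_nonneg)
  qed
  have "cnj (kap Q2 * w^2) = kap Q2 * w^2"
  proof -
    have "cnj (kap Q2 * w^2) = kap Q2 * (a * b * c * d1 * (cnj w)^2)" using lau by (simp add: algebra_simps)
    then show ?thesis unfolding key .
  qed
  then have "Im (kap Q2 * (P' - P)^2) = 0" unfolding w_def by (metis Reals_cnj_iff complex_is_Real_iff)
  then show ?thesis by (rule final_conic[OF Q2_central(2) k0 Q2z(5) PP'])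
qed
end
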